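(* Let $A,B$ be real symmetric $4\times 4$ matrices defining quadrics $\mathcal A: X^TAX=0$, $\mathcal B: X^TBX=0$ in $\mathbb{PR}^3$ with $f(\lambda)=\det(\lambda A-B)$ not identically zero. If $f(\lambda)=0$ has one quadruple root with Segre characteristic $[4]$, then the index sequence is $\langle 2\,{\wr\wr\wr\wr}_{-}\,2\rangle$ or its equivalent form $\langle 2\,{\wr\wr\wr\wr}_{+}\,2\rangle$, and in this case the QSIC comprises a real line and a real space cubic curve tangent to each other at a real point.
   Context: $X=(x,y,z,w)^T$ homogeneous coordinates; QSIC $=\mathcal A\cap\mathcal B$. One may take $A$ nonsingular. Canonical form: for $A$ nonsingular there is a real invertible $Q$ with $Q^TAQ=\mathrm{diag}(\varepsilon_1E_1,\dots)$, $Q^TBQ=\mathrm{diag}(\varepsilon_1E_1J_1,\dots)$, $J_i$ the real Jordan blocks of $A^{-1}B$, $E_i$ anti-identity matrices of matching sizes, and for blocks of real eigenvalues $\varepsilon_i\in\{\pm1\}$ uniquely determined (the sign of $J_i$). Segre characteristic $[4]$: a single eigenvalue with a single $4\times4$ Jordan block. $\mathrm{Id}(\lambda)$ = number of positive eigenvalues of $\lambda A-B$. Index sequence $\langle s_0\sigma_1s_1\rangle$ for one real root: $s_0,s_1$ are the values of $\mathrm{Id}$ before and after the root and $\sigma_1$ is four copies of $\wr$ with subscript the sign of the block. Equivalence of sequences is induced by change of basis of the pencil (including $(A,B)\mapsto(-A,-B)$, which sends $s\mapsto 4-s$ and reverses signs). *)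

theory Defs
  imports "HOL-Analysis.Analysis" "HOL-Computational_Algebra.Polynomial"
begin

section \<open>Quadric pencils in projective 3-space\<close>

type_synonym rmat = "real^4^4"
type_synonym rvec = "real^4"
type_synonym cvec = "complex^4"

definition symmetric4 :: "rmat \<Rightarrow> bool" where
  "symmetric4 M \<longleftrightarrow> transpose M = M"

text \<open>f(lambda) = det(lambda A - B)\<close>
definition pencil_det :: "rmat \<Rightarrow> rmat \<Rightarrow> real \<Rightarrow> real" where
  "pencil_det A B l = det (l *\<^sub>R A - B)"

text \<open>Real 4x4 Jordan block with eigenvalue l and anti-identity E_4.\<close>
definition jordan4 :: "real \<Rightarrow> rmat" where
  "jordan4 l = vector [vector [l,1,0,0], vector [0,l,1,0], vector [0,0,l,1], vector [0,0,0,l]]"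

definition antiid4 :: rmat where
  "antiid4 = vector [vector [0,0,0,1], vector [0,0,1,0], vector [0,1,0,0], vector [1,0,0,0]]"

text \<open>Segre characteristic [4] (A nonsingular): A^{-1}B has the single eigenvalue l
  with a single 4x4 Jordan block.\<close>
definition segre_4 :: "rmat \<Rightarrow> rmat \<Rightarrow> real \<Rightarrow> bool" where
  "segre_4 A B l \<longleftrightarrow> (\<exists>P. invertible P \<and> matrix_inv P ** (matrix_inv A ** B) ** P = jordan4 l)"

text \<open>Characteristic polynomial det(X I - M) and the number of positive eigenvalues
  (counted with algebraic multiplicity).\<close>
definition charpoly4 :: "rmat \<Rightarrow> real poly" where
  "charpoly4 M = det (\<chi> i j. (if i = j then [:0, 1:] else 0) - [:M $ i $ j:])"

definition num_pos_eig :: "rmat \<Rightarrow> nat" where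
  "num_pos_eig M = (\<Sum>r \<in> {r. r > 0 \<and> poly (charpoly4 M) r = 0}. order r (charpoly4 M))"

text \<open>Id(lambda) = number of positive eigenvalues of lambda A - B.\<close>
definition Id_fun :: "rmat \<Rightarrow> rmat \<Rightarrow> real \<Rightarrow> nat" where
  "Id_fun A B l = num_pos_eig (l *\<^sub>R A - B)"

text \<open>Sign of the Jordan block in the canonical form of the pencil (single block [4]):
  there is a real invertible Q with Q^T A Q = eps E_4 and Q^T B Q = eps E_4 J.\<close>
definition block_sign :: "rmat \<Rightarrow> rmat \<Rightarrow> real \<Rightarrow> real \<Rightarrow> bool" where
  "block_sign A B l eps \<longleftrightarrow> (\<exists>Q. invertible Q \<and>
      transpose Q ** A ** Q = eps *\<^sub>R antiid4 \<and>
      transpose Q ** B ** Q = eps *\<^sub>R (antiid4 ** jordan4 l))"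

section \<open>Complex points of the QSIC (as nonzero homogeneous coordinate vectors)\<close>

definition cvec_of :: "rvec \<Rightarrow> cvec" where
  "cvec_of v = (\<chi> i. complex_of_real (v $ i))"

definition cmat_of :: "rmat \<Rightarrow> complex^4^4" where
  "cmat_of M = (\<chi> i j. complex_of_real (M $ i $ j))"

definition qform :: "rmat \<Rightarrow> cvec \<Rightarrow> complex" where
  "qform M X = (\<Sum>i\<in>UNIV. \<Sum>j\<in>UNIV. X $ i * complex_of_real (M $ i $ j) * X $ j)"

text \<open>QSIC: the complex projective points X with X^T A X = 0 and X^T B X = 0.\<close>
definition QSIC :: "rmat \<Rightarrow> rmat \<Rightarrow> cvec set" where
  "QSIC A B = {X. X \<noteq> 0 \<and> qform A X = 0 \<and> qform B X = 0}"

text \<open>The (complex points of the) projective line through two points.\<close>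
definition proj_line :: "cvec \<Rightarrow> cvec \<Rightarrow> cvec set" where
  "proj_line u v = {X. X \<noteq> 0 \<and> (\<exists>a b. X = a *s u + b *s v)}"

text \<open>A real line: spanned by two linearly independent real points.\<close>
definition real_line :: "cvec set \<Rightarrow> bool" where
  "real_line L \<longleftrightarrow> (\<exists>p q :: rvec. p \<noteq> q \<and> independent {p, q}
                      \<and> L = proj_line (cvec_of p) (cvec_of q))"

text \<open>Twisted cubic parametrised by a real invertible matrix M:
  (s:t) maps to M (s^3, s^2 t, s t^2, t^3), and its partial derivatives.\<close>
definition cub :: "'a::comm_ring_1 \<Rightarrow> 'a \<Rightarrow> 'a^4" where
  "cub s t = vector [s^3, s^2 * t, s * t^2, t^3]"

definition cub_ds :: "'a::comm_ring_1 \<Rightarrow> 'a \<Rightarrow> 'a^4" where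
  "cub_ds s t = vector [3 * s^2, 2 * s * t, t^2, 0]"

definition cub_dt :: "'a::comm_ring_1 \<Rightarrow> 'a \<Rightarrow> 'a^4" where
  "cub_dt s t = vector [0, s^2, 2 * s * t, 3 * t^2]"

definition twisted_cubic :: "rmat \<Rightarrow> cvec set" where
  "twisted_cubic M = {X. \<exists>s t :: complex. (s, t) \<noteq> (0, 0) \<and> X = cmat_of M *v cub s t}"

text \<open>C is a real space cubic curve, and the line L is tangent to it at a real point:
  L is the tangent line of C at the real parameter (s0:t0).\<close>
definition real_cubic_tangent_line :: "cvec set \<Rightarrow> cvec set \<Rightarrow> bool" where
  "real_cubic_tangent_line C L \<longleftrightarrow> (\<exists>M :: rmat. invertible M \<and> C = twisted_cubic M \<and>
      (\<exists>s0 t0 :: real. (s0, t0) \<noteq> (0, 0) \<and>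
         L = proj_line (cvec_of (M *v cub_ds s0 t0)) (cvec_of (M *v cub_dt s0 t0))))"

end

theory Submission
  imports Defs
begin


lemma vector_4 [simp]:
 "(vector [x,y,z,w] ::('a::zero)^4)$1 = x"
 "(vector [x,y,z,w] ::('a::zero)^4)$2 = y"
 "(vector [x,y,z,w] ::('a::zero)^4)$3 = z"
 "(vector [x,y,z,w] ::('a::zero)^4)$4 = w"
  unfolding vector_def by simp_all

lemma det_4:
  "det (A::'a::comm_ring_1^4^4) =
    A$1$1 * A$2$2 * A$3$3 * A$4$4 - A$1$1 * A$2$2 * A$3$4 * A$4$3
  - A$1$1 * A$2$3 * A$3$2 * A$4$4 + A$1$1 * A$2$3 * A$3$4 * A$4$2
  + A$1$1 * A$2$4 * A$3$2 * A$4$3 - A$1$1 * A$2$4 * A$3$3 * A$4$2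
  - A$1$2 * A$2$1 * A$3$3 * A$4$4 + A$1$2 * A$2$1 * A$3$4 * A$4$3
  + A$1$2 * A$2$3 * A$3$1 * A$4$4 - A$1$2 * A$2$3 * A$3$4 * A$4$1
  - A$1$2 * A$2$4 * A$3$1 * A$4$3 + A$1$2 * A$2$4 * A$3$3 * A$4$1
  + A$1$3 * A$2$1 * A$3$2 * A$4$4 - A$1$3 * A$2$1 * A$3$4 * A$4$2
  - A$1$3 * A$2$2 * A$3$1 * A$4$4 + A$1$3 * A$2$2 * A$3$4 * A$4$1
  + A$1$3 * A$2$4 * A$3$1 * A$4$2 - A$1$3 * A$2$4 * A$3$2 * A$4$1
  - A$1$4 * A$2$1 * A$3$2 * A$4$3 + A$1$4 * A$2$1 * A$3$3 * A$4$2
  + A$1$4 * A$2$2 * A$3$1 * A$4$3 - A$1$4 * A$2$2 * A$3$3 * A$4$1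
  - A$1$4 * A$2$3 * A$3$1 * A$4$2 + A$1$4 * A$2$3 * A$3$2 * A$4$1"
proof -
  have f1: "finite {2::4, 3, 4}" "1 \<notin> {2::4, 3, 4}" by auto
  have f2: "finite {3::4, 4}" "2 \<notin> {3::4, 4}" by auto
  have f3: "finite {4::4}" "3 \<notin> {4::4}" by auto
  have d: "(1::4) \<noteq> 2" "(1::4) \<noteq> 3" "(1::4) \<noteq> 4" "(2::4) \<noteq> 3" "(2::4) \<noteq> 4" "(3::4) \<noteq> 4"
     "(2::4) \<noteq> 1" "(3::4) \<noteq> 1" "(4::4) \<noteq> 1" "(3::4) \<noteq> 2" "(4::4) \<noteq> 2" "(4::4) \<noteq> 3" by simp_all
  show ?thesis
    unfolding det_def UNIV_4
    unfolding sum_over_permutations_insert[OF f1]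
    unfolding sum_over_permutations_insert[OF f2]
    unfolding sum_over_permutations_insert[OF f3]
    unfolding permutes_sing
    by (simp add: sign_swap_id permutation_swap_id sign_compose sign_id swap_id_eq d permutation_compose algebra_simps)
qed



lemma d4: "(1::4) \<noteq> 2" "(1::4) \<noteq> 3" "(1::4) \<noteq> 4" "(2::4) \<noteq> 3" "(2::4) \<noteq> 4" "(3::4) \<noteq> 4"
     "(2::4) \<noteq> 1" "(3::4) \<noteq> 1" "(4::4) \<noteq> 1" "(3::4) \<noteq> 2" "(4::4) \<noteq> 2" "(4::4) \<noteq> 3" by simp_all

lemma charpoly4_poly: "poly (charpoly4 M) x = det (mat x - M)"
  unfolding charpoly4_def det_4
  apply (simp add: d4 mat_def)
  by algebra

lemma charpoly4_expl:
  "charpoly4 M = [:det M, - ((M$1$1 * M$2$2 * M$3$3 + M$1$2 * M$2$3 * M$3$1 + M$1$3 * M$2$1 * M$3$2 - M$1$1 * M$2$3 * M$3$2 - M$1$2 * M$2$1 * M$3$3 - M$1$3 * M$2$2 * M$3$1) + (M$1$1 * M$2$2 * M$4$4 + M$1$2 * M$2$4 * M$4$1 + M$1$4 * M$2$1 * M$4$2 - M$1$1 * M$2$4 * M$4$2 - M$1$2 * M$2$1 * M$4$4 - M$1$4 * M$2$2 * M$4$1) + (M$1$1 * M$3$3 * M$4$4 + M$1$3 * M$3$4 * M$4$1 + M$1$4 * M$3$1 * M$4$3 - M$1$1 * M$3$4 * M$4$3 - M$1$3 * M$3$1 * M$4$4 - M$1$4 * M$3$3 * M$4$1) + (M$2$2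 * M$3$3 * M$4$4 + M$2$3 * M$3$4 * M$4$2 + M$2$4 * M$3$2 * M$4$3 - M$2$2 * M$3$4 * M$4$3 - M$2$3 * M$3$2 * M$4$4 - M$2$4 * M$3$3 * M$4$2)), (M$1$1 * M$2$2 - M$1$2 * M$2$1) + (M$1$1 * M$3$3 - M$1$3 * M$3$1) + (M$1$1 * M$4$4 - M$1$4 * M$4$1) + (M$2$2 * M$3$3 - M$2$3 * M$3$2) + (M$2$2 * M$4$4 - M$2$4 * M$4$2) + (M$3$3 * M$4$4 - M$3$4 * M$4$3), - (M$1$1 + M$2$2 + M$3$3 + M$4$4), 1:]"
proof -
  have "poly (charpoly4 M) x = poly [:det M, - ((M$1$1 * M$2$2 * M$3$3 + M$1$2 * M$2$3 * M$3$1 + M$1$3 * M$2$1 * M$3$2 - M$1$1 * M$2$3 * M$3$2 - M$1$2 * M$2$1 * M$3$3 - M$1$3 * M$2$2 * M$3$1) + (M$1$1 * M$2$2 * M$4$4 + M$1$2 * M$2$4 * M$4$1 + M$1$4 * M$2$1 * M$4$2 - M$1$1 * M$2$4 * M$4$2 - M$1$2 * M$2$1 * M$4$4 - M$1$4 * M$2$2 * M$4$1) + (M$1$1 * M$3$3 * M$4$4 + M$1$3 * M$3$4 * M$4$1 + M$1$4 * M$3$1 * M$4$3 - M$1$1 * M$3$4 * M$4$3 - M$1$3 * M$3$1 * M$4$4 - M$1$4 * M$3$3 * M$4$1) + (M$2$2 * M$3$3 * M$4$4 + M$2$3 * M$3$4 * M$4$2 + M$2$4 * M$3$2 * M$4$3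 - M$2$2 * M$3$4 * M$4$3 - M$2$3 * M$3$2 * M$4$4 - M$2$4 * M$3$3 * M$4$2)), (M$1$1 * M$2$2 - M$1$2 * M$2$1) + (M$1$1 * M$3$3 - M$1$3 * M$3$1) + (M$1$1 * M$4$4 - M$1$4 * M$4$1) + (M$2$2 * M$3$3 - M$2$3 * M$3$2) + (M$2$2 * M$4$4 - M$2$4 * M$4$2) + (M$3$3 * M$4$4 - M$3$4 * M$4$3), - (M$1$1 + M$2$2 + M$3$3 + M$4$4), 1:] x" for x
    unfolding charpoly4_poly
    unfolding det_4
    apply (simp add: d4 mat_def)
    by algebra
  then show ?thesis using poly_eq_poly_eq_iff by blast
qed



lemma poly_deg2_form:
  fixes q :: "'a::comm_ring_1 poly"
  assumes "degree q = 2"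
  shows "q = [:coeff q 0, coeff q 1, coeff q 2:]"
proof (rule poly_eqI)
  fix n show "coeff q n = coeff [:coeff q 0, coeff q 1, coeff q 2:] n"
  proof (cases "n \<le> 2")
    case True then have "n = 0 \<or> n = 1 \<or> n = 2" by auto
    then show ?thesis by (auto simp: numeral_2_eq_2)
  next
    case False
    then have "coeff q n = 0" using assms by (intro coeff_eq_0) simp
    moreover have "coeff [:coeff q 0, coeff q 1, coeff q 2:] n = 0"
    proof -
      have "n \<ge> 3" using False by simp
      then obtain k where "n = 3 + k" using le_Suc_ex by blast
      then have "n = Suc (Suc (Suc k))" by simp
      then show ?thesis by simp
    qed
    ultimately show ?thesis by simp
  qed
qed

lemma order_lin: "order r [:-a, 1::real:] = (if r = a then 1 else 0)"
proof (cases "r = a")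
  case True then show ?thesis using order_power_n_n[of a 1] by simp
next
  case False
  have "poly [:-a, 1::real:] r \<noteq> 0" using False by simp
  then show ?thesis using False order_root by (metis order_0I)
qed

lemma quartic_two_pos:
  fixes p :: "real poly"
  assumes p: "p = [:c0,c1,c2,c3,1:]" and c0: "c0 > 0"
    and m: "poly p m = 0" "m < 0" and u: "poly p u = 0" "u > 0"
  shows "(\<Sum>r\<in>{r. r>0 \<and> poly p r = 0}. order r p) = 2"
proof -
  have pnz: "p \<noteq> 0" using p by simp
  have dp: "degree p = 4" using p by simp
  have lp: "lead_coeff p = 1" using p by simp
  obtain p1 where p1: "p = [:-m,1:] * p1" using m poly_eq_0_iff_dvd by (metis dvdE)
  have "poly p1 u = 0" using u p1 m by simp
  then obtain q where q: "p1 = [:-u,1:] * q" using poly_eq_0_iff_dvd by (metis dvdE)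
  have pq: "p = [:-m,1:] * [:-u,1:] * q" using p1 q by (metis mult.assoc)
  have qnz: "q \<noteq> 0" using pq pnz by auto
  have dq: "degree q = 2" using dp qnz unfolding pq by (simp add: degree_mult_eq del: mult_pCons_left mult_pCons_right)
  have lq: "coeff q 2 = 1" using lp dq unfolding pq by (simp add: lead_coeff_mult del: mult_pCons_left mult_pCons_right)
  define b where "b = coeff q 1"
  define e where "e = coeff q 0"
  have qf: "q = [:e, b, 1:]" using poly_deg2_form[OF dq] lq b_def e_def by simp
  have "poly p 0 = c0" using p by simp
  moreover have "poly p 0 = m * u * e" using pq qf by simp
  ultimately have "m * u * e > 0" using c0 by simp
  moreover have "m * u < 0" using m u by (simp add: mult_neg_pos)
  ultimately have e: "e < 0" using m u by (auto simp add: zero_less_mult_iff)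
  define s where "s = sqrt (b^2 - 4*e)"
  have b2: "0 \<le> b^2" by simp
  have "b^2 - 4*e \<ge> 0" using e b2 by linarith
  then have s2: "s^2 = b^2 - 4*e" unfolding s_def by simp
  have sb: "s > \<bar>b\<bar>" unfolding s_def using e
    using real_sqrt_less_mono[of "b^2" "b^2 - 4*e"] real_sqrt_abs[of b] by simp
  define r1 where "r1 = (-b + s)/2"
  define r2 where "r2 = (-b - s)/2"
  have r1: "r1 > 0" using sb abs_ge_self[of b] unfolding r1_def by (simp add: field_simps)
  have r2: "r2 < 0" using sb abs_ge_minus_self[of b] unfolding r2_def by (simp add: field_simps)
  have "[:-r1,1:] * [:-r2,1:] = [:r1*r2, -(r1+r2), 1::real:]" by simp
  also have "r1*r2 = e" unfolding r1_def r2_def using s2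
    by (simp add: field_simps power2_eq_square)
  also have "-(r1+r2) = b" unfolding r1_def r2_def by (simp add: field_simps)
  finally have qf2: "q = [:-r1,1:] * [:-r2,1:]" using qf by simp
  have pf: "p = [:-m,1:] * [:-u,1:] * [:-r1,1:] * [:-r2,1:]" using pq qf2 by (metis mult.assoc)
  have ord: "order r p = (if r = m then 1 else 0) + (if r = u then 1 else 0)
     + (if r = r1 then 1 else 0) + (if r = r2 then 1 else 0)" for r
    unfolding pf by (simp add: order_mult order_lin del: mult_pCons_left mult_pCons_right)
  have pp: "poly p x = (x - m)*(x-u)*(x-r1)*(x-r2)" for x
    unfolding pf by (simp del: mult_pCons_left mult_pCons_right)
  have roots: "{r. r>0 \<and> poly p r = 0} = {u, r1}"
    using m u r1 r2 unfolding pp by auto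
  show ?thesis
  proof (cases "u = r1")
    case True then show ?thesis using roots ord m u r2 by simp
  next
    case False then show ?thesis using roots ord m u r1 r2 by simp
  qed
qed



lemma sym_inner:
  fixes M :: "real^'n^'n"
  assumes "transpose M = M"
  shows "x \<bullet> (M *v y) = y \<bullet> (M *v x)"
proof -
  have "x \<bullet> (M *v y) = (x v* M) \<bullet> y" by (simp add: dot_lmul_matrix)
  also have "x v* M = M *v x" by (metis assms transpose_matrix_vector)
  finally show ?thesis by (simp add: inner_commute)
qed

lemma quad_zero:
  fixes a c :: real
  assumes "\<And>s. 2 * s * a + s^2 * c \<ge> 0" and "c \<ge> 0"
  shows "a = 0"
proof (rule ccontr)
  assume a: "a \<noteq> 0"
  define s where "s = - a / (c + 1)"
  have c1: "c + 1 > 0" using assms by simp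
  have sc: "s * (c+1) = -a" unfolding s_def using c1 by simp
  have "(c + 1)^2 * (2 * s * a + s^2 * c) = 2 * a * (s * (c + 1)) * (c + 1) + c * (s * (c + 1))^2" by algebra
  also have "\<dots> = - (a^2 * (c+2))" unfolding sc by algebra
  also have "\<dots> < 0" using a assms(2) by simp
  finally have "(c + 1)^2 * (2 * s * a + s^2 * c) < 0" .
  moreover have "(c+1)^2 > 0" using c1 by simp
  ultimately have "2 * s * a + s^2 * c < 0" by (simp add: mult_less_0_iff)
  then show False using assms(1)[of s] by simp
qed

lemma neg_eig:
  fixes M :: "real^'n^'n"
  assumes sym: "transpose M = M" and inv: "det M \<noteq> 0" and v: "v \<noteq> 0" "v \<bullet> (M *v v) \<le> 0"
  shows "\<exists>m u. m < 0 \<and> u \<noteq> 0 \<and> M *v u = m *\<^sub>R u"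
proof -
  define f where "f x = x \<bullet> (M *v x)" for x :: "real^'n"
  have cont: "continuous_on (sphere 0 1) f" unfolding f_def
    by (intro continuous_intros bounded_linear.continuous_on[OF matrix_vector_mul_bounded_linear])
  obtain u where u: "u \<in> sphere 0 1" and umin: "\<And>y. y \<in> sphere 0 1 \<Longrightarrow> f u \<le> f y"
    using continuous_attains_inf[OF compact_sphere _ cont] by force
  define mu where "mu = f u"
  have fscale: "f (c *\<^sub>R w) = c^2 * f w" for c w
    unfolding f_def by (simp add: matrix_vector_mult_scaleR power2_eq_square)
  have bound: "f w \<ge> mu * (w \<bullet> w)" for w
  proof (cases "w = 0")
    case True then show ?thesis unfolding f_def by simp
  next
    case False
    have "(1 / norm w) *\<^sub>R w \<in> sphere 0 1" using False by simp
    then have "mu \<le> f ((1 / norm w) *\<^sub>R w)" using umin mu_def by blast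
    also have "\<dots> = f w / (norm w)^2" using fscale by (simp add: power_one_over)
    finally show ?thesis using False by (simp add: field_simps dot_square_norm)
  qed
  have mu_le: "mu \<le> 0"
  proof -
    have "(1 / norm v) *\<^sub>R v \<in> sphere 0 1" using v by simp
    then have "mu \<le> f ((1 / norm v) *\<^sub>R v)" using umin mu_def by blast
    also have "\<dots> = f v / (norm v)^2" using fscale by (simp add: power_one_over)
    also have "\<dots> \<le> 0" using v unfolding f_def by (simp add: divide_nonpos_pos)
    finally show ?thesis .
  qed
  define K where "K = M - mu *\<^sub>R mat 1"
  have Kw: "K *v w = M *v w - mu *\<^sub>R w" for w
    unfolding K_def by (simp add: matrix_vector_mult_diff_rdistrib flip: scaleR_matrix_vector_assoc)
  have symK: "transpose K = K" unfolding K_def using sym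
    by (simp add: transpose_def vec_eq_iff mat_def)
  have gpos: "w \<bullet> (K *v w) \<ge> 0" for w
    using bound[of w] unfolding Kw f_def by (simp add: inner_diff_right)
  have uu: "u \<bullet> u = 1" using u by (simp add: dot_square_norm)
  have gu: "u \<bullet> (K *v u) = 0"
    using uu unfolding Kw mu_def f_def by (simp add: inner_diff_right)
  have orth: "w \<bullet> (K *v u) = 0" for w
  proof (rule quad_zero)
    show "w \<bullet> (K *v w) \<ge> 0" by (rule gpos)
    fix s :: real
    have "0 \<le> (u + s *\<^sub>R w) \<bullet> (K *v (u + s *\<^sub>R w))" by (rule gpos)
    also have "\<dots> = u \<bullet> (K *v u) + s * (w \<bullet> (K *v u)) + s * (u \<bullet> (K *v w)) + s^2 * (w \<bullet> (K *v w))"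
      by (simp add: matrix_vector_right_distrib matrix_vector_mult_scaleR inner_add_left inner_add_right power2_eq_square algebra_simps)
    also have "u \<bullet> (K *v w) = w \<bullet> (K *v u)" using sym_inner[OF symK] by blast
    finally show "0 \<le> 2 * s * (w \<bullet> (K *v u)) + s^2 * (w \<bullet> (K *v w))" using gu by simp
  qed
  have "K *v u = 0" using orth[of "K *v u"] by simp
  then have Mu: "M *v u = mu *\<^sub>R u" unfolding Kw by simp
  have unz: "u \<noteq> 0" using u by auto
  have "mu \<noteq> 0"
  proof
    assume "mu = 0"
    then have "M *v u = M *v 0" using Mu by simp
    moreover have "inj ((*v) M)" using inv invertible_det_nz inj_matrix_vector_mult by blast
    ultimately show False using unz by (meson injD)
  qed
  then show ?thesis using mu_le Mu unz by (intro exI[of _ mu] exI[of _ u]) auto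
qed



lemma mat_mult_vec: "(mat m :: real^'n^'n) *v u = m *\<^sub>R u"
proof -
  have "(\<Sum>j\<in>UNIV. (if i = j then m else 0) * u $ j) = m * u $ i" for i
    by (simp add: if_distrib[of "\<lambda>x. x * _"] sum.delta cong: if_cong)
  then show ?thesis by (simp add: vec_eq_iff matrix_vector_mult_def mat_def)
qed

lemma eig_root:
  fixes M :: "real^4^4"
  assumes "u \<noteq> 0" "M *v u = m *\<^sub>R u"
  shows "poly (charpoly4 M) m = 0"
proof -
  have "(mat m - M) *v u = 0" using assms
    by (simp add: matrix_vector_mult_diff_rdistrib mat_mult_vec)
  then have "(mat m - M) *v u = (mat m - M) *v 0" by simp
  then have "\<not> inj ((*v) (mat m - M))" using assms(1) by (meson injD)
  then have "det (mat m - M) = 0" using invertible_det_nz inj_matrix_vector_mult by blast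
  then show ?thesis by (simp add: charpoly4_poly)
qed

lemma det_neg4: "det (- (M::real^4^4)) = det M"
  unfolding det_4 by simp

lemma npe2:
  fixes M :: "real^4^4"
  assumes sym: "transpose M = M" and d: "det M > 0" and v: "v \<noteq> 0" "v \<bullet> (M *v v) = 0"
  shows "num_pos_eig M = 2"
proof -
  obtain m u where mu: "m < 0" "u \<noteq> 0" "M *v u = m *\<^sub>R u"
    using neg_eig[OF sym _ v(1)] d v(2) by force
  have symn: "transpose (- M) = - M" using sym by (simp add: transpose_def vec_eq_iff)
  have negv: "(- M) *v w = - (M *v w)" for w
    by (simp add: matrix_vector_mult_def vec_eq_iff sum_negf)
  obtain m' u' where mu': "m' < 0" "u' \<noteq> 0" "(- M) *v u' = m' *\<^sub>R u'"
    using neg_eig[OF symn _ v(1)] d v(2) by (force simp: det_neg4 negv)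
  have Mu': "M *v u' = (- m') *\<^sub>R u'" using mu'(3) unfolding negv
    by (metis minus_minus scaleR_minus_left)
  show ?thesis unfolding num_pos_eig_def
    by (rule quartic_two_pos[OF charpoly4_expl d eig_root[OF mu(2,3)] mu(1) eig_root[OF mu'(2) Mu']])
       (use mu' in simp)
qed



definition hank :: "real \<Rightarrow> real \<Rightarrow> real \<Rightarrow> real \<Rightarrow> real^4^4" where
  "hank a b c d = vector [vector [0,0,0,a], vector [0,0,a,b], vector [0,a,b,c], vector [a,b,c,d]]"

definition toep :: "real \<Rightarrow> real \<Rightarrow> real \<Rightarrow> real \<Rightarrow> real^4^4" where
  "toep a b c d = vector [vector [a,b,c,d], vector [0,a,b,c], vector [0,0,a,b], vector [0,0,0,a]]"

lemma mat4_eqI: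
  fixes X Y :: "'a^4^4"
  assumes "X$1$1 = Y$1$1" "X$1$2 = Y$1$2" "X$1$3 = Y$1$3" "X$1$4 = Y$1$4"
          "X$2$1 = Y$2$1" "X$2$2 = Y$2$2" "X$2$3 = Y$2$3" "X$2$4 = Y$2$4"
          "X$3$1 = Y$3$1" "X$3$2 = Y$3$2" "X$3$3 = Y$3$3" "X$3$4 = Y$3$4"
          "X$4$1 = Y$4$1" "X$4$2 = Y$4$2" "X$4$3 = Y$4$3" "X$4$4 = Y$4$4"
  shows "X = Y"
  using assms by (simp add: vec_eq_iff forall_4)

lemma mmul4: "((X::'a::semiring_1^4^4) ** Y)$i$j = X$i$1 * Y$1$j + X$i$2 * Y$2$j + X$i$3 * Y$3$j + X$i$4 * Y$4$j"
  by (simp add: matrix_matrix_mult_def sum_4)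

lemma hank_char:
  fixes H :: "real^4^4"
  assumes s1: "transpose H = H" and s2: "transpose (H ** jordan4 l) = H ** jordan4 l"
  shows "H = hank (H$1$4) (H$2$4) (H$3$4) (H$4$4)"
proof -
  have t: "H$j$i = H$i$j" for i j
  proof -
    have "(transpose H)$i$j = H$j$i" by (simp add: transpose_def)
    then show ?thesis using s1 by simp
  qed
  have u: "(H ** jordan4 l)$j$i = (H ** jordan4 l)$i$j" for i j
  proof -
    have "(transpose (H ** jordan4 l))$i$j = (H ** jordan4 l)$j$i" by (simp add: transpose_def)
    then show ?thesis using s2 by simp
  qed
  have tt: "H$2$1 = H$1$2" "H$3$1 = H$1$3" "H$4$1 = H$1$4" "H$3$2 = H$2$3" "H$4$2 = H$2$4" "H$4$3 = H$3$4"
    by (rule t)+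
  have uu: "(H ** jordan4 l)$j$i = (H ** jordan4 l)$i$j" for i j by (rule u)
  have e12: "H$1$1 = 0" using uu[of 1 2] tt by (simp add: mmul4 jordan4_def)
  have e13: "H$1$2 = 0" using uu[of 1 3] tt by (simp add: mmul4 jordan4_def)
  have e14: "H$1$3 = 0" using uu[of 1 4] tt by (simp add: mmul4 jordan4_def)
  have e23: "H$2$2 = 0" using uu[of 2 3] tt e14 by (simp add: mmul4 jordan4_def)
  have e24: "H$2$3 = H$1$4" using uu[of 2 4] tt by (simp add: mmul4 jordan4_def)
  have e34: "H$3$3 = H$2$4" using uu[of 3 4] tt by (simp add: mmul4 jordan4_def)
  show ?thesis unfolding hank_def
    by (intro mat4_eqI) (simp_all add: tt e12 e13 e14 e23 e24 e34)
qed


lemma toep_hank: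
  "transpose (toep q0 q1 q2 q3) ** hank a b c d ** toep q0 q1 q2 q3 =
   hank (q0^2*a) (2*q0*q1*a + q0^2*b) ((q1^2+2*q0*q2)*a + 2*q0*q1*b + q0^2*c)
        ((2*q0*q3+2*q1*q2)*a + (q1^2+2*q0*q2)*b + 2*q0*q1*c + q0^2*d)"
  unfolding toep_def hank_def
  by (intro mat4_eqI) (simp_all add: mmul4 transpose_def power2_eq_square algebra_simps)

lemma toep_J: "toep q0 q1 q2 q3 ** jordan4 l = jordan4 l ** toep q0 q1 q2 q3"
  unfolding toep_def jordan4_def
  by (intro mat4_eqI) (simp_all add: mmul4 algebra_simps)

lemma det_toep: "det (toep q0 q1 q2 q3) = q0^4"
  unfolding toep_def det_4 by (simp add: power4_eq_xxxx)

lemma det_hank: "det (hank a b c d) = a^4"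
  unfolding hank_def det_4 by (simp add: power4_eq_xxxx)

lemma hank_eps: "eps *\<^sub>R antiid4 = hank eps 0 0 0"
  unfolding hank_def antiid4_def
  by (intro mat4_eqI) simp_all

lemma det_antiid4: "det antiid4 = 1"
  unfolding antiid4_def det_4 by simp

lemma inv_props:
  fixes X :: "real^4^4"
  assumes "invertible X"
  shows "X ** matrix_inv X = mat 1" "matrix_inv X ** X = mat 1"
proof -
  have "\<exists>X'. X ** X' = mat 1 \<and> X' ** X = mat 1" using assms unfolding invertible_def by blast
  then have "X ** matrix_inv X = mat 1 \<and> matrix_inv X ** X = mat 1"
    unfolding matrix_inv_def by (rule someI_ex)
  then show "X ** matrix_inv X = mat 1" "matrix_inv X ** X = mat 1" by auto
qed

lemma canon:
  fixes A B :: "real^4^4"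
  assumes symA: "symmetric4 A" and symB: "symmetric4 B" and Ainv: "invertible A"
    and segre: "segre_4 A B l0"
  shows "\<exists>Q eps. invertible Q \<and> (eps = -1 \<or> eps = 1) \<and>
     transpose Q ** A ** Q = eps *\<^sub>R antiid4 \<and> transpose Q ** B ** Q = eps *\<^sub>R (antiid4 ** jordan4 l0)"
proof -
  obtain P where P: "invertible P" and PJ: "matrix_inv P ** (matrix_inv A ** B) ** P = jordan4 l0"
    using segre unfolding segre_4_def by blast
  have "P ** (matrix_inv P ** (matrix_inv A ** B) ** P) = P ** jordan4 l0" using PJ by simp
  then have "(matrix_inv A ** B) ** P = P ** jordan4 l0"
    by (simp add: matrix_mul_assoc inv_props[OF P])
  then have "A ** ((matrix_inv A ** B) ** P) = A ** (P ** jordan4 l0)" by simp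
  then have BP: "B ** P = A ** P ** jordan4 l0"
    by (simp add: matrix_mul_assoc inv_props[OF Ainv])
  define H where "H = transpose P ** A ** P"
  have At: "transpose A = A" using symA unfolding symmetric4_def .
  have Bt: "transpose B = B" using symB unfolding symmetric4_def .
  have Hs: "transpose H = H" unfolding H_def
    by (simp add: matrix_transpose_mul At matrix_mul_assoc)
  have HB: "transpose P ** B ** P = H ** jordan4 l0" unfolding H_def
    by (simp add: BP flip: matrix_mul_assoc)
  have HJs: "transpose (H ** jordan4 l0) = H ** jordan4 l0" unfolding HB[symmetric]
    by (simp add: matrix_transpose_mul Bt matrix_mul_assoc)
  define a where "a = H$1$4"
  define b where "b = H$2$4"
  define c where "c = H$3$4"
  define d where "d = H$4$4"
  have Hh: "H = hank a b c d" unfolding a_def b_def c_def d_def by (rule hank_char[OF Hs HJs])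
  have "det H = det P * det A * det P" unfolding H_def by (simp add: det_mul det_transpose)
  moreover have "det P \<noteq> 0" "det A \<noteq> 0" using P Ainv invertible_det_nz by auto
  ultimately have "det H \<noteq> 0" by simp
  then have a0: "a \<noteq> 0" unfolding Hh det_hank by simp
  define eps :: real where "eps = (if a > 0 then 1 else -1)"
  define q0 where "q0 = 1 / sqrt \<bar>a\<bar>"
  have q0nz: "q0 \<noteq> 0" unfolding q0_def using a0 by simp
  have q0a: "q0^2 * a = eps" unfolding q0_def eps_def using a0
    by (simp add: power_divide abs_if)
  define q1 where "q1 = - q0 * b / (2 * a)"
  define q2 where "q2 = - (q1^2 * a + 2*q0*q1*b + q0^2*c) / (2 * q0 * a)"
  define q3 where "q3 = - (2*q1*q2*a + (q1^2+2*q0*q2)*b + 2*q0*q1*c + q0^2*d) / (2 * q0 * a)"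
  have e1: "2*q0*q1*a + q0^2*b = 0" unfolding q1_def using a0 by (simp add: field_simps power2_eq_square)
  have e2: "(q1^2+2*q0*q2)*a + 2*q0*q1*b + q0^2*c = 0" unfolding q2_def using a0 q0nz
    by (simp add: field_simps power2_eq_square)
  have e3: "(2*q0*q3+2*q1*q2)*a + (q1^2+2*q0*q2)*b + 2*q0*q1*c + q0^2*d = 0" unfolding q3_def using a0 q0nz
    by (simp add: field_simps power2_eq_square)
  define T where "T = toep q0 q1 q2 q3"
  have Tinv: "invertible T" unfolding T_def invertible_det_nz det_toep using q0nz by simp
  define Q where "Q = P ** T"
  have Qinv: "invertible Q" unfolding Q_def using P Tinv invertible_mult by blast
  have QA: "transpose Q ** A ** Q = transpose T ** H ** T" unfolding Q_def H_def
    by (simp add: matrix_transpose_mul matrix_mul_assoc)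
  have QA2: "transpose Q ** A ** Q = eps *\<^sub>R antiid4"
    unfolding QA Hh T_def toep_hank q0a e1 e2 e3 hank_eps ..
  have "transpose Q ** B ** Q = transpose T ** (H ** jordan4 l0) ** T" unfolding Q_def HB[symmetric]
    by (simp add: matrix_transpose_mul matrix_mul_assoc)
  also have "\<dots> = transpose T ** H ** (T ** jordan4 l0)" unfolding T_def toep_J
    by (simp add: matrix_mul_assoc)
  also have "\<dots> = (transpose Q ** A ** Q) ** jordan4 l0" unfolding QA by (simp add: matrix_mul_assoc)
  also have "\<dots> = eps *\<^sub>R (antiid4 ** jordan4 l0)" unfolding QA2 by (simp add: scalar_matrix_assoc)
  finally have QB: "transpose Q ** B ** Q = eps *\<^sub>R (antiid4 ** jordan4 l0)" .
  have "eps = -1 \<or> eps = 1" unfolding eps_def by auto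
  then show ?thesis using Qinv QA2 QB by blast
qed



lemma det_scale4: "det (k *\<^sub>R (M::real^4^4)) = k^4 * det M"
  unfolding det_4 by (simp add: power4_eq_xxxx algebra_simps)

lemma detA_eq:
  fixes A B :: "real^4^4"
  assumes h: "\<forall>l. pencil_det A B l = c * (l - l0)^4"
  shows "det A = c"
proof -
  define g where "g t = det (A - t *\<^sub>R B)" for t
  define f where "f t = c * (1 - t * l0)^4" for t
  have eq: "g t = f t" if "t \<noteq> 0" for t
  proof -
    have "A - t *\<^sub>R B = t *\<^sub>R ((1/t) *\<^sub>R A - B)" using that by (simp add: algebra_simps)
    then have "g t = t^4 * pencil_det A B (1/t)" unfolding g_def pencil_det_def by (simp add: det_scale4)
    also have "\<dots> = c * (t * (1/t - l0))^4" using h by (simp add: power_mult_distrib)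
    also have "t * (1/t - l0) = 1 - t * l0" using that by (simp add: algebra_simps)
    finally show ?thesis unfolding f_def .
  qed
  have gc: "isCont g 0" unfolding g_def det_4
    by (simp add: continuous_intros)
  have fc: "isCont f 0" unfolding f_def by (intro continuous_intros)
  have "(g \<longlongrightarrow> g 0) (at 0)" using gc isCont_def by blast
  moreover have "(g \<longlongrightarrow> f 0) (at 0)"
  proof -
    have "(f \<longlongrightarrow> f 0) (at 0)" using fc isCont_def by blast
    moreover have "eventually (\<lambda>t. f t = g t) (at 0)"
      unfolding eventually_at using eq by (metis dist_nz zero_less_one)
    ultimately show ?thesis using tendsto_cong by (metis (mono_tags, lifting))
  qed
  ultimately have "g 0 = f 0" using LIM_unique by blast
  then show ?thesis unfolding g_def f_def by simp
qed



lemma mdiff_l: "(X::real^4^4) ** (Y - Z) = X ** Y - X ** Z"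
  by (simp add: vec_eq_iff matrix_matrix_mult_def sum_subtractf algebra_simps)

lemma mdiff_r: "((Y::real^4^4) - Z) ** X = Y ** X - Z ** X"
  by (simp add: vec_eq_iff matrix_matrix_mult_def sum_subtractf algebra_simps)

lemma quad_transform:
  fixes Q M :: "real^'n^'n"
  shows "(Q *v x) \<bullet> (M *v (Q *v y)) = x \<bullet> ((transpose Q ** M ** Q) *v y)"
proof -
  have q: "Q *v x = x v* transpose Q" by (metis transpose_matrix_vector transpose_transpose)
  have "(Q *v x) \<bullet> (M *v (Q *v y)) = x \<bullet> (transpose Q *v (M *v (Q *v y)))"
    by (simp only: q dot_lmul_matrix)
  also have "\<dots> = x \<bullet> ((transpose Q ** M ** Q) *v y)"
    by (simp only: matrix_vector_mul_assoc matrix_mul_assoc)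
  finally show ?thesis .
qed

lemma e1_quad: "axis 1 1 \<bullet> ((S::real^4^4) *v axis 1 1) = S$1$1"
  by (simp add: inner_vec_def sum_4 matrix_vector_mult_def axis_def d4)

lemma Id_part:
  fixes A B Q :: "real^4^4"
  assumes symA: "symmetric4 A" and symB: "symmetric4 B"
    and Qi: "invertible Q" and eps: "eps = -1 \<or> eps = 1"
    and QA: "transpose Q ** A ** Q = eps *\<^sub>R antiid4"
    and QB: "transpose Q ** B ** Q = eps *\<^sub>R (antiid4 ** jordan4 l0)"
    and h: "\<forall>l. pencil_det A B l = c * (l - l0)^4"
    and l: "l \<noteq> l0"
  shows "Id_fun A B l = 2"
proof -
  define M where "M = l *\<^sub>R A - B"
  have At: "transpose A = A" using symA unfolding symmetric4_def .
  have Bt: "transpose B = B" using symB unfolding symmetric4_def .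
  have Mt: "transpose M = M" unfolding M_def using At Bt
    by (simp add: transpose_def vec_eq_iff)
  have "det (transpose Q ** A ** Q) = det Q * det A * det Q" by (simp add: det_mul)
  also have "det (transpose Q ** A ** Q) = 1" unfolding QA det_scale4 det_antiid4 using eps by auto
  finally have "det A * (det Q)^2 = 1" by (simp add: power2_eq_square algebra_simps)
  moreover have "(det Q)^2 \<ge> 0" by simp
  ultimately have dA: "det A > 0"
    by (metis less_eq_real_def mult_eq_0_iff mult_nonpos_nonneg not_le zero_less_one)
  have cA: "c = det A" using detA_eq[OF h] by simp
  have dM: "det M > 0" unfolding M_def using h cA dA l
    by (simp add: pencil_det_def)
  define S where "S = transpose Q ** M ** Q"
  have S: "S = l *\<^sub>R (eps *\<^sub>R antiid4) - eps *\<^sub>R (antiid4 ** jordan4 l0)"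
    unfolding S_def M_def QA[symmetric] QB[symmetric]
    by (simp add: mdiff_l mdiff_r matrix_scalar_ac scalar_matrix_assoc matrix_mul_assoc)
  have S11: "S$1$1 = 0" unfolding S
    by (simp add: mmul4 antiid4_def jordan4_def)
  define v where "v = Q *v axis 1 1"
  have vq: "v \<bullet> (M *v v) = 0" unfolding v_def quad_transform S_def[symmetric] e1_quad S11 ..
  have "v \<noteq> 0"
  proof
    assume "v = 0"
    then have "Q *v axis 1 1 = Q *v 0" unfolding v_def by simp
    then have "axis 1 (1::real) = (0::real^4)" using inj_matrix_vector_mult[OF Qi] by (meson injD)
    then show False by (simp add: axis_eq_0_iff)
  qed
  then show ?thesis unfolding Id_fun_def M_def[symmetric]
    using npe2[OF Mt dM _ vq] by simp
qed



lemma cvec_mult: "cvec_of (A *v x) = cmat_of A *v cvec_of x"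
  by (simp add: vec_eq_iff cvec_of_def cmat_of_def matrix_vector_mult_def)

lemma cmat_mult: "cmat_of (A ** B) = cmat_of A ** cmat_of B"
  by (simp add: vec_eq_iff cmat_of_def matrix_matrix_mult_def)

lemma cmat_one: "cmat_of (mat 1) = mat 1"
  by (simp add: vec_eq_iff cmat_of_def mat_def)

lemma qform_transform:
  "qform A (cmat_of Q *v Y) = qform (transpose Q ** A ** Q) Y"
proof -
  have "qform A (cmat_of Q *v Y) =
    (\<Sum>i\<in>UNIV. \<Sum>j\<in>UNIV. \<Sum>k\<in>UNIV. \<Sum>m\<in>UNIV. Y$k * of_real (Q$i$k * A$i$j * Q$j$m) * Y$m)"
    unfolding qform_def cmat_of_def matrix_vector_mult_def
    by (simp add: sum_distrib_left sum_distrib_right mult_ac)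
  also have "\<dots> = (\<Sum>i\<in>UNIV. \<Sum>k\<in>UNIV. \<Sum>j\<in>UNIV. \<Sum>m\<in>UNIV. Y$k * of_real (Q$i$k * A$i$j * Q$j$m) * Y$m)"
    by (rule sum.cong[OF refl], rule sum.swap)
  also have "\<dots> = (\<Sum>k\<in>UNIV. \<Sum>i\<in>UNIV. \<Sum>j\<in>UNIV. \<Sum>m\<in>UNIV. Y$k * of_real (Q$i$k * A$i$j * Q$j$m) * Y$m)"
    by (rule sum.swap)
  also have "\<dots> = (\<Sum>k\<in>UNIV. \<Sum>i\<in>UNIV. \<Sum>m\<in>UNIV. \<Sum>j\<in>UNIV. Y$k * of_real (Q$i$k * A$i$j * Q$j$m) * Y$m)"
    by (rule sum.cong[OF refl], rule sum.cong[OF refl], rule sum.swap)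
  also have "\<dots> = (\<Sum>k\<in>UNIV. \<Sum>m\<in>UNIV. \<Sum>i\<in>UNIV. \<Sum>j\<in>UNIV. Y$k * of_real (Q$i$k * A$i$j * Q$j$m) * Y$m)"
    by (rule sum.cong[OF refl], rule sum.swap)
  also have "\<dots> = (\<Sum>k\<in>UNIV. \<Sum>m\<in>UNIV. \<Sum>j\<in>UNIV. \<Sum>i\<in>UNIV. Y$k * of_real (Q$i$k * A$i$j * Q$j$m) * Y$m)"
    by (rule sum.cong[OF refl], rule sum.cong[OF refl], rule sum.swap)
  also have "\<dots> = qform (transpose Q ** A ** Q) Y"
    unfolding qform_def matrix_matrix_mult_def transpose_def
    by (simp add: sum_distrib_left sum_distrib_right mult_ac)
  finally show ?thesis .
qed



definition M0 :: "real^4^4" where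
  "M0 = vector [vector [1/2,0,0,0], vector [0,-1/2,0,0], vector [0,0,1,0], vector [0,0,0,1]]"

lemma mv4: "((X::'a::semiring_1^4^4) *v v)$i = X$i$1 * v$1 + X$i$2 * v$2 + X$i$3 * v$3 + X$i$4 * v$4"
  by (simp add: matrix_vector_mult_def sum_4)

lemma vec4_eqI:
  fixes X Y :: "'a^4"
  assumes "X$1 = Y$1" "X$2 = Y$2" "X$3 = Y$3" "X$4 = Y$4"
  shows "X = Y"
  using assms by (simp add: vec_eq_iff forall_4)

lemma M0_cub: "cmat_of M0 *v cub s t = vector [s^3/2, -(s^2*t)/2, s*t^2, t^3]"
  by (intro vec4_eqI) (simp_all add: mv4 cmat_of_def M0_def cub_def)

lemma u0_eq: "cvec_of (M0 *v cub_ds 1 0) = vector [3/2, 0, 0, 0]"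
  by (intro vec4_eqI) (simp_all add: mv4 cvec_of_def M0_def cub_ds_def)

lemma v0_eq: "cvec_of (M0 *v cub_dt 1 0) = vector [0, -1/2, 0, 0]"
  by (intro vec4_eqI) (simp_all add: mv4 cvec_of_def M0_def cub_dt_def)

lemma cube_root: "\<exists>t::complex. t^3 = w"
proof (cases "w = 0")
  case True then show ?thesis by auto
next
  case False
  have "exp (Ln w / 3) ^ 3 = exp (of_nat 3 * (Ln w / 3))" by (simp only: exp_of_nat_mult)
  also have "\<dots> = w" using False by simp
  finally show ?thesis by blast
qed

lemma qsic0:
  fixes Y :: "complex^4"
  shows "(Y \<noteq> 0 \<and> Y$1*Y$4 + Y$2*Y$3 = 0 \<and> 2*Y$2*Y$4 + Y$3^2 = 0) \<longleftrightarrow>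
    ((Y \<noteq> 0 \<and> (\<exists>a b. Y = a *s cvec_of (M0 *v cub_ds 1 0) + b *s cvec_of (M0 *v cub_dt 1 0))) \<or>
     (\<exists>s t. (s, t) \<noteq> (0, 0) \<and> Y = cmat_of M0 *v cub s t))"
  (is "?L \<longleftrightarrow> ?R")
proof
  assume L: ?L
  show ?R
  proof (cases "Y$4 = 0")
    case True
    then have "Y$3^2 = 0" using L by simp
    then have "Y$3 = 0" by simp
    then have "Y = (2/3 * Y$1) *s cvec_of (M0 *v cub_ds 1 0) + (-2 * Y$2) *s cvec_of (M0 *v cub_dt 1 0)"
      unfolding u0_eq v0_eq using True by (intro vec4_eqI) simp_all
    then show ?thesis using L by blast
  next
    case False
    obtain t where t: "t^3 = Y$4" using cube_root by blast
    have t0: "t \<noteq> 0" using t False by auto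
    define s where "s = Y$3 / t^2"
    have h1: "Y$1*Y$4 = -(Y$2*Y$3)" using L by (simp add: eq_neg_iff_add_eq_0)
    have h2: "Y$2*(2*Y$4) = -(Y$3^2)" using L by (simp add: eq_neg_iff_add_eq_0 algebra_simps)
    have y2: "Y$2 = - (Y$3^2) / (2 * Y$4)"
    proof -
      have "Y$2 = Y$2*(2*Y$4)/(2*Y$4)" using False by simp
      also have "\<dots> = - (Y$3^2) / (2 * Y$4)" by (simp only: h2)
      finally show ?thesis .
    qed
    have y1: "Y$1 = - (Y$2 * Y$3) / Y$4"
    proof -
      have "Y$1 = Y$1*Y$4/Y$4" using False by simp
      also have "\<dots> = - (Y$2 * Y$3) / Y$4" by (simp only: h1)
      finally show ?thesis .
    qed
    have c3: "Y$3 = s * t^2" unfolding s_def using t0 by simp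
    have c2: "Y$2 = -(s^2*t)/2" unfolding y2 s_def t[symmetric] using t0
      by (simp add: field_simps power2_eq_square power3_eq_cube)
    have c1: "Y$1 = s^3/2" unfolding y1 y2 s_def t[symmetric] using t0
      by (simp add: field_simps power2_eq_square power3_eq_cube)
    have "Y = cmat_of M0 *v cub s t" unfolding M0_cub
      by (intro vec4_eqI) (simp_all add: c1 c2 c3 t)
    then show ?thesis using t0 by blast
  qed
next
  assume R: ?R
  then show ?L
  proof
    assume "Y \<noteq> 0 \<and> (\<exists>a b. Y = a *s cvec_of (M0 *v cub_ds 1 0) + b *s cvec_of (M0 *v cub_dt 1 0))"
    then obtain a b where "Y \<noteq> 0" "Y = a *s vector [3/2, 0, 0, 0] + b *s vector [0, -1/2, 0, 0]"
      unfolding u0_eq v0_eq by blast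
    then show ?L by simp
  next
    assume "\<exists>s t. (s, t) \<noteq> (0, 0) \<and> Y = cmat_of M0 *v cub s t"
    then obtain s t where st: "(s, t) \<noteq> (0, 0)" "Y = vector [s^3/2, -(s^2*t)/2, s*t^2, t^3]"
      unfolding M0_cub by blast
    have "Y \<noteq> 0"
    proof
      assume "Y = 0"
      then have "Y$1 = 0" "Y$4 = 0" by auto
      then show False using st by simp
    qed
    then show ?L using st by (simp add: power2_eq_square power3_eq_cube algebra_simps)
  qed
qed



lemma qform_E: "qform (eps *\<^sub>R antiid4) Y = of_real eps * (2 * (Y$1*Y$4 + Y$2*Y$3))"
  unfolding qform_def sum_4 antiid4_def by (simp add: algebra_simps)

lemma qform_F: "qform (eps *\<^sub>R (antiid4 ** jordan4 l0)) Y =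
   of_real eps * (of_real l0 * (2 * (Y$1*Y$4 + Y$2*Y$3)) + (2*Y$2*Y$4 + Y$3^2))"
  unfolding qform_def sum_4 by (simp add: mmul4 antiid4_def jordan4_def algebra_simps power2_eq_square)

lemma mv_lin: "(M::'a::comm_ring_1^'n^'m) *v (a *s u + b *s v) = a *s (M *v u) + b *s (M *v v)"
  by (simp add: vec_eq_iff matrix_vector_mult_def sum_distrib_left sum.distrib algebra_simps)

lemma aux: "(e::complex) \<noteq> 0 \<Longrightarrow> (e * (2*a) = 0 \<and> e * (l*(2*a) + b) = 0) \<longleftrightarrow> (a = 0 \<and> b = 0)"
  by auto

lemma det_M0: "det M0 = - 1/4"
  unfolding M0_def det_4 by simp

lemma qsic_part:
  fixes A B Q :: "real^4^4"
  assumes Qi: "invertible Q" and eps: "eps = -1 \<or> eps = 1"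
    and QA: "transpose Q ** A ** Q = eps *\<^sub>R antiid4"
    and QB: "transpose Q ** B ** Q = eps *\<^sub>R (antiid4 ** jordan4 l0)"
  shows "\<exists>L C. QSIC A B = L \<union> C \<and> real_line L \<and> real_cubic_tangent_line C L"
proof -
  define MM where "MM = Q ** M0"
  define L where "L = proj_line (cvec_of (MM *v cub_ds 1 0)) (cvec_of (MM *v cub_dt 1 0))"
  define C where "C = twisted_cubic MM"
  define Qc where "Qc = cmat_of Q"
  define Qic where "Qic = cmat_of (matrix_inv Q)"
  have QQ1: "Qc ** Qic = mat 1" unfolding Qc_def Qic_def
    by (simp add: inv_props[OF Qi] flip: cmat_mult cmat_one)
  have QQ2: "Qic ** Qc = mat 1" unfolding Qc_def Qic_def
    by (simp add: inv_props[OF Qi] flip: cmat_mult cmat_one)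
  have backQ: "X = Qc *v Z \<longleftrightarrow> Qic *v X = Z" for X Z
  proof
    assume "X = Qc *v Z" then show "Qic *v X = Z" by (simp add: matrix_vector_mul_assoc QQ2)
  next
    assume "Qic *v X = Z" then show "X = Qc *v Z" by (metis matrix_vector_mul_assoc QQ1 matrix_vector_mul_lid)
  qed
  have epsnz: "(of_real eps :: complex) \<noteq> 0" using eps by auto
  have cvMM: "cvec_of (MM *v w) = Qc *v cvec_of (M0 *v w)" for w
    unfolding MM_def Qc_def by (simp add: cvec_mult cmat_mult matrix_vector_mul_assoc)
  have cmMM: "cmat_of MM *v z = Qc *v (cmat_of M0 *v z)" for z
    unfolding MM_def Qc_def by (simp add: cmat_mult matrix_vector_mul_assoc)
  define u0 where "u0 = cvec_of (M0 *v cub_ds 1 0)"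
  define v0 where "v0 = cvec_of (M0 *v cub_dt 1 0)"
  have main: "X \<in> QSIC A B \<longleftrightarrow> X \<in> L \<union> C" for X
  proof -
    define Y where "Y = Qic *v X"
    have XY: "X = Qc *v Y" using backQ Y_def by blast
    have X0: "X \<noteq> 0 \<longleftrightarrow> Y \<noteq> 0" by (metis XY Y_def matrix_vector_mult_0_right)
    have "X \<in> QSIC A B \<longleftrightarrow> X \<noteq> 0 \<and> qform A (Qc *v Y) = 0 \<and> qform B (Qc *v Y) = 0"
      unfolding QSIC_def using XY by simp
    also have "\<dots> \<longleftrightarrow> Y \<noteq> 0 \<and> qform (eps *\<^sub>R antiid4) Y = 0 \<and> qform (eps *\<^sub>R (antiid4 ** jordan4 l0)) Y = 0"
      unfolding Qc_def qform_transform QA QB using X0 by simp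
    also have "\<dots> \<longleftrightarrow> (Y \<noteq> 0 \<and> Y$1*Y$4 + Y$2*Y$3 = 0 \<and> 2*Y$2*Y$4 + Y$3^2 = 0)"
      unfolding qform_E qform_F aux[OF epsnz] ..
    also have "\<dots> \<longleftrightarrow> ((Y \<noteq> 0 \<and> (\<exists>a b. Y = a *s u0 + b *s v0)) \<or>
       (\<exists>s t. (s, t) \<noteq> (0, 0) \<and> Y = cmat_of M0 *v cub s t))"
      unfolding u0_def v0_def by (rule qsic0)
    also have "(Y \<noteq> 0 \<and> (\<exists>a b. Y = a *s u0 + b *s v0)) \<longleftrightarrow> X \<in> L"
    proof -
      have "(\<exists>a b. Y = a *s u0 + b *s v0) \<longleftrightarrow> (\<exists>a b. X = a *s (Qc *v u0) + b *s (Qc *v v0))"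
        using backQ[of X] mv_lin[of Qc] unfolding Y_def by metis
      then show ?thesis unfolding L_def proj_line_def cvMM u0_def v0_def using X0 by auto
    qed
    also have "(\<exists>s t. (s, t) \<noteq> (0, 0) \<and> Y = cmat_of M0 *v cub s t) \<longleftrightarrow> X \<in> C"
      unfolding C_def twisted_cubic_def mem_Collect_eq cmMM Y_def backQ ..
    finally show ?thesis by blast
  qed
  have LC: "QSIC A B = L \<union> C" using main by blast
  have p0: "M0 *v cub_ds 1 0 = (vector [3/2, 0, 0, 0] :: real^4)"
    by (intro vec4_eqI) (simp_all add: mv4 M0_def cub_ds_def)
  have q0: "M0 *v cub_dt 1 0 = (vector [0, -1/2, 0, 0] :: real^4)"
    by (intro vec4_eqI) (simp_all add: mv4 M0_def cub_dt_def)
  define p where "p = MM *v cub_ds 1 0"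
  define q where "q = MM *v cub_dt 1 0"
  have pQ: "p = Q *v vector [3/2, 0, 0, 0]" unfolding p_def MM_def p0[symmetric]
    by (simp add: matrix_vector_mul_assoc)
  have qQ: "q = Q *v vector [0, -1/2, 0, 0]" unfolding q_def MM_def q0[symmetric]
    by (simp add: matrix_vector_mul_assoc)
  have injQ: "inj ((*v) Q)" using inj_matrix_vector_mult[OF Qi] .
  have pq: "p \<noteq> q"
  proof
    assume "p = q"
    then have "(vector [3/2, 0, 0, 0] :: real^4) = vector [0, -1/2, 0, 0]"
      unfolding pQ qQ using injQ by (meson injD)
    then have "(vector [3/2, 0, 0, 0] :: real^4)$1 = (vector [0, -1/2, 0, 0] :: real^4)$1" by simp
    then show False by simp
  qed
  have qnz: "q \<noteq> 0"
  proof
    assume "q = 0"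
    then have "Q *v vector [0, -1/2, 0, 0] = Q *v 0" unfolding qQ by simp
    then have "(vector [0, -1/2, 0, 0] :: real^4) = 0" using injQ by (meson injD)
    then have "(vector [0, -1/2, 0, 0] :: real^4)$2 = 0" by simp
    then show False by simp
  qed
  have pspan: "p \<notin> span {q}"
  proof
    assume "p \<in> span {q}"
    then obtain k where "p = k *\<^sub>R q" by (auto simp: span_singleton)
    then have "Q *v vector [3/2, 0, 0, 0] = Q *v (k *\<^sub>R vector [0, -1/2, 0, 0])"
      unfolding pQ qQ by (simp add: matrix_vector_mult_scaleR)
    then have "(vector [3/2, 0, 0, 0] :: real^4) = k *\<^sub>R vector [0, -1/2, 0, 0]" using injQ by (meson injD)
    then have "(vector [3/2, 0, 0, 0] :: real^4)$1 = (k *\<^sub>R (vector [0, -1/2, 0, 0] :: real^4))$1" by simp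
    then show False by simp
  qed
  have ind: "independent {p, q}"
    by (rule independent_insertI[OF pspan]) (simp add: qnz)
  have rl: "real_line L" unfolding real_line_def L_def p_def[symmetric] q_def[symmetric]
    using pq ind by blast
  have M0i: "invertible M0" unfolding invertible_det_nz det_M0 by simp
  have MMi: "invertible MM" unfolding MM_def using Qi M0i invertible_mult by blast
  have st: "((1::real), (0::real)) \<noteq> (0, 0) \<and> L = proj_line (cvec_of (MM *v cub_ds 1 0)) (cvec_of (MM *v cub_dt 1 0))"
    using L_def by simp
  have ct: "real_cubic_tangent_line C L" unfolding real_cubic_tangent_line_def
    using MMi C_def st by blast
  show ?thesis using LC rl ct by blast
qed


theorem theorem12:
  fixes A B :: "real^4^4" and l0 :: real
  assumes symA: "symmetric4 A" and symB: "symmetric4 B"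
    and nonzero: "\<exists>l. pencil_det A B l \<noteq> 0"
    and quad_root: "\<exists>c. c \<noteq> 0 \<and> (\<forall>l. pencil_det A B l = c * (l - l0) ^ 4)"
    and segre: "segre_4 A B l0"
  shows "(\<forall>l<l0. Id_fun A B l = 2) \<and> (\<forall>l>l0. Id_fun A B l = 2)
         \<and> (\<exists>eps. (eps = -1 \<or> eps = 1) \<and> block_sign A B l0 eps)
         \<and> (\<exists>L C. QSIC A B = L \<union> C \<and> real_line L \<and> real_cubic_tangent_line C L)"
proof -
  obtain c where c: "c \<noteq> 0" and h: "\<forall>l. pencil_det A B l = c * (l - l0) ^ 4"
    using quad_root by blast
  have "det A = c" using detA_eq[OF h] .
  then have Ai: "invertible A" using c invertible_det_nz by auto
  obtain Q eps where Qi: "invertible Q" and eps: "eps = -1 \<or> eps = 1"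
    and QA: "transpose Q ** A ** Q = eps *\<^sub>R antiid4"
    and QB: "transpose Q ** B ** Q = eps *\<^sub>R (antiid4 ** jordan4 l0)"
    using canon[OF symA symB Ai segre] by blast
  have I1: "\<forall>l<l0. Id_fun A B l = 2"
    using Id_part[OF symA symB Qi eps QA QB h] by auto
  have I2: "\<forall>l>l0. Id_fun A B l = 2"
    using Id_part[OF symA symB Qi eps QA QB h] by auto
  have bs: "\<exists>eps. (eps = -1 \<or> eps = 1) \<and> block_sign A B l0 eps"
    unfolding block_sign_def using Qi eps QA QB by blast
  show ?thesis using I1 I2 bs qsic_part[OF Qi eps QA QB] by blast
qed

end
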